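(* There is no flag complex whose $h$-polynomial $h_0+h_1t+\cdots+h_dt^d$ equals $1+3t+3t^2$; that is, no flag complex of dimension $d-1\ge 1$ has $h$-vector $(1,3,3,0,\ldots,0)$. In particular, the face vector $(1,3,3)$ of the boundary of a triangle is not the $h$-vector of any flag complex.
   Context: A flag complex is the independence complex $\mathrm{Ind}(G)$ of a graph $G$ (faces are independent sets). For a $(d-1)$-dimensional complex with face vector $(f_{-1},\ldots,f_{d-1})$ ($f_i$ = number of faces with $i+1$ elements), the $h$-vector is $(h_0,\ldots,h_d)$ with $h_j=\sum_{i=0}^{j}(-1)^{j-i}\binom{d-i}{j-i}f_{i-1}$. *)

theory Defs
  imports Main
begin

text \<open>A finite simple graph is given by a finite vertex set V and a symmetric,
irreflexive edge relation E. The faces of the flag complex Ind(G) are the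
independent sets of G.\<close>

definition indep_sets :: "'a set \<Rightarrow> ('a \<Rightarrow> 'a \<Rightarrow> bool) \<Rightarrow> 'a set set" where
  "indep_sets V E = {S. S \<subseteq> V \<and> (\<forall>x\<in>S. \<forall>y\<in>S. \<not> E x y)}"

text \<open>d = (dimension of Ind(G)) + 1 = maximal size of a face.\<close>
definition ind_d :: "'a set \<Rightarrow> ('a \<Rightarrow> 'a \<Rightarrow> bool) \<Rightarrow> nat" where
  "ind_d V E = Max (card ` indep_sets V E)"

text \<open>face_num V E i = f_{i-1} = number of faces with i elements.\<close>
definition face_num :: "'a set \<Rightarrow> ('a \<Rightarrow> 'a \<Rightarrow> bool) \<Rightarrow> nat \<Rightarrow> nat" where
  "face_num V E i = card {S \<in> indep_sets V E. card S = i}"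

definition h_vec :: "'a set \<Rightarrow> ('a \<Rightarrow> 'a \<Rightarrow> bool) \<Rightarrow> nat \<Rightarrow> int" where
  "h_vec V E j = (\<Sum>i=0..j. (-1) ^ (j - i) * int ((ind_d V E - i) choose (j - i)) * int (face_num V E i))"

end

theory Submission imports Defs begin
definition edges :: "'a set \<Rightarrow> ('a \<Rightarrow> 'a \<Rightarrow> bool) \<Rightarrow> 'a set set" where
  "edges V E = {{x,y} | x y. x \<in> V \<and> y \<in> V \<and> E x y}"
lemma edgesD: "e \<in> edges V E \<Longrightarrow> \<exists>x y. e = {x,y} \<and> E x y" unfolding edges_def by blast
lemma edgesI: "x \<in> V \<Longrightarrow> y \<in> V \<Longrightarrow> E x y \<Longrightarrow> {x,y} \<in> edges V E" unfolding edges_def by blast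

lemma indep_iff:
  shows "S \<in> indep_sets V E \<longleftrightarrow> S \<subseteq> V \<and> \<not>(\<exists>e\<in>edges V E. e \<subseteq> S)"
proof
  assume S: "S \<in> indep_sets V E"
  then have SV: "S \<subseteq> V" and I: "\<forall>x\<in>S. \<forall>y\<in>S. \<not> E x y" unfolding indep_sets_def by auto
  have "\<not>(\<exists>e\<in>edges V E. e \<subseteq> S)"
  proof
    assume "\<exists>e\<in>edges V E. e \<subseteq> S"
    then obtain e where "e \<in> edges V E" "e \<subseteq> S" by blast
    then obtain x y where "e = {x,y}" "E x y" using edgesD by blast
    then have "x \<in> S" "y \<in> S" "E x y" using \<open>e \<subseteq> S\<close> by auto
    with I show False by blast
  qed
  with SV show "S \<subseteq> V \<and> \<not>(\<exists>e\<in>edges V E. e \<subseteq> S)" by simp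
next
  assume A: "S \<subseteq> V \<and> \<not>(\<exists>e\<in>edges V E. e \<subseteq> S)"
  have "\<forall>x\<in>S. \<forall>y\<in>S. \<not> E x y"
  proof (intro ballI notI)
    fix x y assume xy: "x \<in> S" "y \<in> S" "E x y"
    have "x \<in> V" "y \<in> V" using A xy by auto
    then have "{x,y} \<in> edges V E" using xy(3) by (rule edgesI)
    moreover have "{x,y} \<subseteq> S" using xy by simp
    ultimately show False using A by blast
  qed
  then show "S \<in> indep_sets V E" using A unfolding indep_sets_def mem_Collect_eq by blast
qed

lemma edge_card:
  assumes "\<And>x. \<not> E x x" "e \<in> edges V E"
  shows "card e = 2"
proof -
  obtain x y where "e = {x,y}" "E x y" using assms(2) edgesD by blast
  moreover have "x \<noteq> y" using assms(1) \<open>E x y\<close> by metis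
  ultimately show ?thesis by simp
qed
lemma edges_sub: "e \<in> edges V E \<Longrightarrow> e \<subseteq> V" unfolding edges_def by auto

definition bad :: "'a set \<Rightarrow> ('a \<Rightarrow> 'a \<Rightarrow> bool) \<Rightarrow> nat \<Rightarrow> 'a set set" where
  "bad V E i = {S. S \<subseteq> V \<and> card S = i \<and> (\<exists>e\<in>edges V E. e \<subseteq> S)}"

lemma face_num_eq:
  assumes "finite V" "\<And>x. \<not> E x x"
  shows "int (face_num V E i) = int (card V choose i) - int (card (bad V E i))"
proof -
  have eq: "{S \<in> indep_sets V E. card S = i} = {S. S \<subseteq> V \<and> card S = i} - bad V E i"
    unfolding bad_def by (auto simp: indep_iff)
  have sub: "bad V E i \<subseteq> {S. S \<subseteq> V \<and> card S = i}" unfolding bad_def by blast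
  have fin: "finite {S. S \<subseteq> V \<and> card S = i}" using assms(1) by simp
  have "card ({S. S \<subseteq> V \<and> card S = i} - bad V E i) = card {S. S \<subseteq> V \<and> card S = i} - card (bad V E i)"
    by (rule card_Diff_subset[OF finite_subset[OF sub fin] sub])
  moreover have "card (bad V E i) \<le> card {S. S \<subseteq> V \<and> card S = i}" by (rule card_mono[OF fin sub])
  ultimately show ?thesis unfolding face_num_def eq using n_subsets[OF assms(1)] by simp
qed

lemma bad1: assumes "finite V" "\<And>x. \<not> E x x" shows "bad V E 1 = {}"
proof -
  { fix S e assume "S \<subseteq> V" "card S = 1" "e \<in> edges V E" "e \<subseteq> S"
    have fS: "finite S" using \<open>S \<subseteq> V\<close> assms(1) by (rule finite_subset)
    have "card e \<le> card S" using fS \<open>e \<subseteq> S\<close> by (rule card_mono)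
    then have "card e \<le> 1" using \<open>card S = 1\<close> by simp
    with edge_card[where E=E, OF assms(2) \<open>e \<in> _\<close>] have False by simp }
  then show ?thesis unfolding bad_def by blast
qed

lemma bad2: assumes "finite V" "\<And>x. \<not> E x x" shows "bad V E 2 = edges V E"
proof -
  { fix S e assume "S \<subseteq> V" "card S = 2" "e \<in> edges V E" "e \<subseteq> S"
    then have "e = S" using card_subset_eq[of S e] edge_card[where E=E, OF assms(2)] assms(1) finite_subset by fastforce }
  moreover have "\<And>e. e \<in> edges V E \<Longrightarrow> e \<in> bad V E 2"
    unfolding bad_def using edge_card[where E=E, OF assms(2)] edges_sub by blast
  ultimately show ?thesis unfolding bad_def by blast
qed

lemma indep_finite: "finite V \<Longrightarrow> finite (indep_sets V E)"
  unfolding indep_sets_def by (rule finite_subset[of _ "Pow V"]) auto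

lemma card_le_d: "finite V \<Longrightarrow> S \<in> indep_sets V E \<Longrightarrow> card S \<le> ind_d V E"
  unfolding ind_d_def using indep_finite by (intro Max_ge) auto

lemma h0: "h_vec V E 0 = int (face_num V E 0)" by (simp add: h_vec_def)
lemma h1: "h_vec V E 1 = - int (ind_d V E) * int (face_num V E 0) + int (face_num V E 1)"
  by (simp add: h_vec_def)
lemma h2: "h_vec V E 2 = int (ind_d V E choose 2) * int (face_num V E 0) - int (ind_d V E - 1) * int (face_num V E 1) + int (face_num V E 2)"
  by (simp add: h_vec_def eval_nat_numeral)
lemma h3: "h_vec V E 3 = - int (ind_d V E choose 3) * int (face_num V E 0) + int ((ind_d V E - 1) choose 2) * int (face_num V E 1) - int (ind_d V E - 2) * int (face_num V E 2) + int (face_num V E 3)"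
  by (simp add: h_vec_def eval_nat_numeral)
lemma ch2: "2 * (Suc n choose 2) = Suc n * n"
proof (induction n)
  case 0 then show ?case by (simp add: numeral_2_eq_2)
next
  case (Suc n)
  have "Suc (Suc n) choose 2 = Suc n + (Suc n choose 2)" by (simp add: numeral_2_eq_2)
  then show ?case using Suc by simp
qed
lemma ch3: "6 * (Suc (Suc n) choose 3) = Suc (Suc n) * Suc n * n"
proof (induction n)
  case 0 then show ?case by (simp add: numeral_3_eq_3)
next
  case (Suc n)
  have "Suc (Suc (Suc n)) choose 3 = (Suc (Suc n) choose 2) + (Suc (Suc n) choose 3)" by (simp add: numeral_3_eq_3 numeral_2_eq_2)
  then show ?case using Suc ch2[of "Suc n"] by (simp add: algebra_simps)
qed

lemma arith:
  fixes d n :: nat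
  assumes "n = d + 3" "d \<ge> 3"
  shows "- int (d choose 3) + int ((d-1) choose 2) * int n - int (d-2) * (int (n choose 2) - 3) + int (n choose 3) - 3 * int (n-2) = 1"
proof -
  obtain k where k: "d = k + 3" using assms(2) by (metis add.commute le_Suc_ex)
  have a: "6 * int (d choose 3) = int d * (int d - 1) * (int d - 2)"
    using arg_cong[OF ch3[of "k+1"], of int] k
    by (simp add: algebra_simps) (simp add: algebra_simps eval_nat_numeral)
  have b: "2 * int ((d-1) choose 2) = (int d - 1) * (int d - 2)"
    using arg_cong[OF ch2[of "k+1"], of int] k
    by (simp add: numeral_2_eq_2) (simp add: algebra_simps)
  have c: "2 * int (n choose 2) = int n * (int n - 1)"
    using arg_cong[OF ch2[of "k+5"], of int] k assms by simp
  have e: "6 * int (n choose 3) = int n * (int n - 1) * (int n - 2)"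
    using arg_cong[OF ch3[of "k+4"], of int] k assms by simp
  have "int n = int d + 3" "int (d-2) = int d - 2" "int (n-2) = int d + 1" using assms by auto
  then show ?thesis using a b c e by algebra
qed

lemma edges_finite: "finite V \<Longrightarrow> finite (edges V E)"
  by (rule finite_subset[of _ "Pow V"]) (auto dest: edges_sub)

lemma fam_card:
  assumes "finite V" "\<And>x. \<not> E x x" "e \<in> edges V E"
  shows "card {S. S \<subseteq> V \<and> card S = 3 \<and> e \<subseteq> S} = card V - 2"
proof -
  have ce: "card e = 2" using edge_card[where E=E, OF assms(2,3)] .
  have fe: "finite e" using ce by (intro card_ge_0_finite) simp
  have eV: "e \<subseteq> V" using edges_sub[where E=E, OF assms(3)] .
  have "{S. S \<subseteq> V \<and> card S = 3 \<and> e \<subseteq> S} = (\<lambda>x. insert x e) ` (V - e)"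
  proof
    show "{S. S \<subseteq> V \<and> card S = 3 \<and> e \<subseteq> S} \<subseteq> (\<lambda>x. insert x e) ` (V - e)"
    proof
      fix S assume S: "S \<in> {S. S \<subseteq> V \<and> card S = 3 \<and> e \<subseteq> S}"
      then have fS: "finite S" using assms(1) finite_subset by blast
      have "card (S - e) = 1" using S fS card_Diff_subset[OF fe] ce by auto
      then obtain x where x: "S - e = {x}" using card_1_singletonE by blast
      then have "S = insert x e" using S by blast
      moreover have "x \<in> V - e" using x S by blast
      ultimately show "S \<in> (\<lambda>x. insert x e) ` (V - e)" by blast
    qed
    show "(\<lambda>x. insert x e) ` (V - e) \<subseteq> {S. S \<subseteq> V \<and> card S = 3 \<and> e \<subseteq> S}"
      using eV fe ce by auto
  qed
  moreover have "inj_on (\<lambda>x. insert x e) (V - e)"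
    by (rule inj_onI) blast
  then have "card ((\<lambda>x. insert x e) ` (V - e)) = card (V - e)" by (rule card_image)
  ultimately show ?thesis
    using card_Diff_subset[OF fe eV] ce by simp
qed

lemma m_arith: "(A::int) * 1 - D1 * N + (B - M) = 3 \<Longrightarrow> 2 * A = D * (D - 1) \<Longrightarrow> 2 * B = N * (N - 1) \<Longrightarrow> D1 = D - 1 \<Longrightarrow> N = D + 3 \<Longrightarrow> 2 * M = 6"
proof -
  assume a: "(A::int) * 1 - D1 * N + (B - M) = 3" "2 * A = D * (D - 1)" "2 * B = N * (N - 1)" "D1 = D - 1" "N = D + 3"
  have "2 * M = 2 * A - 2 * (D1 * N) + 2 * B - 6" using a(1) by linarith
  also have "\<dots> = D * (D - 1) - 2 * (D1 * N) + N * (N - 1) - 6" using a(2,3) by linarith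
  also have "\<dots> = D * (D - 1) - 2 * ((D - 1) * (D + 3)) + (D + 3) * (D + 3 - 1) - 6" unfolding a(4,5) ..
  also have "\<dots> = 6" by (simp add: algebra_simps)
  finally show ?thesis .
qed

theorem mainTheorem8:
  fixes V :: "'a set" and E :: "'a \<Rightarrow> 'a \<Rightarrow> bool"
  assumes "finite V"
    and "\<And>x y. E x y \<Longrightarrow> E y x"
    and "\<And>x. \<not> E x x"
  shows "\<not> (2 \<le> ind_d V E \<and> h_vec V E 0 = 1 \<and> h_vec V E 1 = 3 \<and> h_vec V E 2 = 3
             \<and> (\<forall>j. 3 \<le> j \<and> j \<le> ind_d V E \<longrightarrow> h_vec V E j = 0))"
proof
  assume H: "2 \<le> ind_d V E \<and> h_vec V E 0 = 1 \<and> h_vec V E 1 = 3 \<and> h_vec V E 2 = 3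
             \<and> (\<forall>j. 3 \<le> j \<and> j \<le> ind_d V E \<longrightarrow> h_vec V E j = 0)"
  define d where "d = ind_d V E"
  define n where "n = card V"
  define m where "m = card (edges V E)"
  have d2: "d \<ge> 2" using H d_def by simp
  have f0: "int (face_num V E 0) = 1" using H h0[of V E] by simp
  have f1: "int (face_num V E 1) = int n"
    using face_num_eq[where E=E and i=1, OF assms(1,3)] bad1[where E=E, OF assms(1,3)] n_def by simp
  have f2: "int (face_num V E 2) = int (n choose 2) - int m"
    using face_num_eq[where E=E and i=2, OF assms(1,3)] bad2[where E=E, OF assms(1,3)] n_def m_def by simp
  have H1: "h_vec V E 1 = 3" and H2: "h_vec V E 2 = 3" using H by auto
  have "- int d * 1 + int n = 3" using h1[of V E] H1 unfolding d_def[symmetric] f0 f1 by simp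
  then have nd: "n = d + 3" by simp
  have m3: "m = 3"
  proof -
    have "int (d choose 2) * 1 - int (d - 1) * int n + (int (n choose 2) - int m) = 3"
      using h2[of V E] H2 unfolding d_def[symmetric] f0 f1 f2 by simp
    moreover obtain k where k: "d = k + 2" using d2 by (metis add.commute le_Suc_ex)
    moreover have "2 * int (d choose 2) = int d * (int d - 1)"
      using arg_cong[OF ch2[of "k+1"], of int] k by (simp add: algebra_simps)
    moreover have "2 * int (n choose 2) = int n * (int n - 1)"
      using arg_cong[OF ch2[of "k+4"], of int] k nd by (simp add: algebra_simps)
    moreover have "int (d - 1) = int d - 1" "int n = int d + 3" using d2 nd by auto
    ultimately have "2 * int m = 6" by (intro m_arith[of "int (d choose 2)" "int (d - 1)" "int n" "int (n choose 2)" "int m" "int d"]) auto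
    then show ?thesis by simp
  qed
  have finE: "finite (edges V E)" using edges_finite[OF assms(1)] .
  have disj: "e \<inter> e' = {}" if "e \<in> edges V E" "e' \<in> edges V E" "e \<noteq> e'" for e e'
  proof (rule ccontr)
    assume "e \<inter> e' \<noteq> {}"
    then obtain a where a: "a \<in> e" "a \<in> e'" by blast
    have "card (edges V E - {e, e'}) = 1" using m3 m_def that finE by (simp add: card_Diff_subset)
    then obtain e'' where e'': "edges V E - {e, e'} = {e''}" using card_1_singletonE by blast
    have ed: "edges V E = {e, e', e''}" using e'' that by blast
    have "e'' \<in> edges V E" using ed by blast
    then obtain b where b: "b \<in> e''" using edge_card[where E=E, OF assms(3)] by fastforce
    have "V - {a, b} \<in> indep_sets V E"
      unfolding indep_iff using ed a b by blast
    then have "card (V - {a,b}) \<le> d" using card_le_d[OF assms(1)] d_def by blast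
    moreover have "card (V - {a,b}) \<ge> n - 2"
    proof -
      have "card {a,b} \<le> 2" by (cases "a = b") auto
      moreover have "card (V \<inter> {a,b}) \<le> card {a,b}" by (rule card_mono) auto
      ultimately show ?thesis using card_Diff_subset_Int[of V "{a,b}"] assms(1) n_def by simp
    qed
    ultimately show False using nd by simp
  qed
  obtain e1 e2 e3 where E3: "edges V E = {e1, e2, e3}" "e1 \<noteq> e2" "e2 \<noteq> e3" "e1 \<noteq> e3"
    using m3 m_def card_3_iff by metis
  have d3: "d \<ge> 3"
  proof -
    have c: "card e1 = 2" "card e2 = 2" "card e3 = 2" using edge_card[where E=E, OF assms(3)] E3 by auto
    have fin: "finite e1" "finite e2" "finite e3" using c by (auto intro: card_ge_0_finite)
    have "card (e1 \<union> e2 \<union> e3) = 6"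
      using disj E3 c fin by (simp add: card_Un_disjoint Int_Un_distrib2)
    moreover have "e1 \<union> e2 \<union> e3 \<subseteq> V" using edges_sub E3 by blast
    ultimately have "6 \<le> n" using card_mono[OF assms(1)] n_def by metis
    then show ?thesis using nd by simp
  qed
  have bad3: "bad V E 3 = (\<Union>e\<in>edges V E. {S. S \<subseteq> V \<and> card S = 3 \<and> e \<subseteq> S})"
    unfolding bad_def by blast
  have "card (bad V E 3) = (\<Sum>e\<in>edges V E. card {S. S \<subseteq> V \<and> card S = 3 \<and> e \<subseteq> S})"
    unfolding bad3
  proof (rule card_UN_disjoint[OF finE])
    show "\<forall>e\<in>edges V E. finite {S. S \<subseteq> V \<and> card S = 3 \<and> e \<subseteq> S}"
      using assms(1) by (auto intro: finite_subset[of _ "Pow V"])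
    show "\<forall>e\<in>edges V E. \<forall>e'\<in>edges V E. e \<noteq> e' \<longrightarrow>
        {S. S \<subseteq> V \<and> card S = 3 \<and> e \<subseteq> S} \<inter> {S. S \<subseteq> V \<and> card S = 3 \<and> e' \<subseteq> S} = {}"
    proof (intro ballI impI)
      fix e e' assume ee: "e \<in> edges V E" "e' \<in> edges V E" "e \<noteq> e'"
      show "{S. S \<subseteq> V \<and> card S = 3 \<and> e \<subseteq> S} \<inter> {S. S \<subseteq> V \<and> card S = 3 \<and> e' \<subseteq> S} = {}"
      proof (rule ccontr)
        assume "\<not> ?thesis"
        then obtain S where S: "S \<subseteq> V" "card S = 3" "e \<subseteq> S" "e' \<subseteq> S" by blast
        have c: "card e = 2" "card e' = 2" using edge_card[where E=E, OF assms(3)] ee by auto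
        have fin: "finite e" "finite e'" using c by (auto intro: card_ge_0_finite)
        have "card (e \<union> e') = 4" using disj[OF ee] c fin by (simp add: card_Un_disjoint)
        moreover have "card (e \<union> e') \<le> card S"
          using S assms(1) finite_subset by (intro card_mono) auto
        ultimately show False using S by simp
      qed
    qed
  qed
  also have "\<dots> = 3 * (n - 2)" using fam_card[where E=E, OF assms(1,3)] m3 m_def n_def by simp
  finally have "card (bad V E 3) = 3 * (n - 2)" .
  then have f3: "int (face_num V E 3) = int (n choose 3) - 3 * int (n - 2)"
    using face_num_eq[where E=E and i=3, OF assms(1,3)] n_def by simp
  have "h_vec V E 3 = 0" using H d3 d_def by auto
  moreover have "h_vec V E 3 = 1"
    using h3[of V E] arith[OF nd d3] unfolding d_def[symmetric] f0 f1 f2 f3 m3 by simp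
  ultimately show False by simp
qed
end
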